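(* For $s\ge3$, we have $\mathrm{ex}(n,P^{(3)}_s)=f(n,s-2)$.
   Context: An ordered $3$-uniform hypergraph is a $3$-uniform hypergraph with linearly ordered vertex set; $G$ contains $H$ if there is an order-preserving injection $f:V(H)\to V(G)$ with $f(e)\in E(G)$ for all $e\in E(H)$. $\mathrm{ex}(n,H)$ is the maximum number of edges of an $n$-vertex ordered $3$-uniform hypergraph not containing $H$. $P^{(3)}_s$ has vertices $v_1<\dots<v_s$ and edges $\{v_j,v_{j+1},v_{j+2}\}$ for $1\le j\le s-2$. Let $K^{(2)}_n$ be the complete graph on $[n]$ with the natural order. A $k$-edge-labeling $\phi$ of $K^{(2)}_n$ assigns to each pair $uv$ a label from a fixed linearly ordered set of size $k$. A triple $u<v<w$ is good (for $\phi$) if $\phi(uv)<\phi(vw)$, and bad otherwise. $f(n,k)$ is the maximum, over all $k$-edge-labelings of $K^{(2)}_n$, of the number of good triples. *)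

theory Defs
  imports Main
begin

text \<open>An ordered 3-uniform hypergraph on vertex set [n] = {1..n} (natural order)
  is given by its edge set: a set of 3-element subsets of {1..n}.\<close>
definition triples :: "nat \<Rightarrow> nat set set" where
  "triples n = {e. e \<subseteq> {1..n} \<and> card e = 3}"

definition ord_hypergraph3 :: "nat \<Rightarrow> nat set set \<Rightarrow> bool" where
  "ord_hypergraph3 n E \<longleftrightarrow> E \<subseteq> triples n"

definition ord_contains :: "nat \<Rightarrow> nat set set \<Rightarrow> nat \<Rightarrow> nat set set \<Rightarrow> bool" where
  "ord_contains n G m H \<longleftrightarrow>
     (\<exists>f. strict_mono_on {1..m} f \<and> f ` {1..m} \<subseteq> {1..n} \<and> (\<forall>e\<in>H. f ` e \<in> G))"

definition ex3 :: "nat \<Rightarrow> nat \<Rightarrow> nat set set \<Rightarrow> nat" where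
  "ex3 n m H = Max {card G | G. ord_hypergraph3 n G \<and> \<not> ord_contains n G m H}"

definition tight_path :: "nat \<Rightarrow> nat set set" where
  "tight_path s = {{j, j+1, j+2} | j. 1 \<le> j \<and> j + 2 \<le> s}"

text \<open>A k-edge-labeling of K_n on [n]: the pair u<v gets label phi u v \<in> {0..<k}
  (labels form a linearly ordered set of size k; values off such pairs are irrelevant).\<close>
definition edge_labeling :: "nat \<Rightarrow> nat \<Rightarrow> (nat \<Rightarrow> nat \<Rightarrow> nat) \<Rightarrow> bool" where
  "edge_labeling n k \<phi> \<longleftrightarrow> (\<forall>u v. 1 \<le> u \<and> u < v \<and> v \<le> n \<longrightarrow> \<phi> u v < k)"

definition good_triples :: "nat \<Rightarrow> (nat \<Rightarrow> nat \<Rightarrow> nat) \<Rightarrow> (nat \<times> nat \<times> nat) set" where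
  "good_triples n \<phi> = {(u, v, w). 1 \<le> u \<and> u < v \<and> v < w \<and> w \<le> n \<and> \<phi> u v < \<phi> v w}"

definition f_good :: "nat \<Rightarrow> nat \<Rightarrow> nat" where
  "f_good n k = Max {card (good_triples n \<phi>) | \<phi>. edge_labeling n k \<phi>}"

end

theory Submission
  imports Defs
begin

definition tpath :: "nat \<Rightarrow> nat set set \<Rightarrow> (nat \<Rightarrow> nat) \<Rightarrow> nat \<Rightarrow> bool" where
  "tpath n G g t \<longleftrightarrow> strict_mono_on {1..t+2} g \<and> g ` {1..t+2} \<subseteq> {1..n}
     \<and> (\<forall>j\<in>{1..t}. {g j, g (j+1), g (j+2)} \<in> G)"

definition lab :: "nat \<Rightarrow> nat set set \<Rightarrow> nat \<Rightarrow> nat \<Rightarrow> nat" where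
  "lab n G u v = Max {t. \<exists>g. tpath n G g t \<and> g (t+1) = u \<and> g (t+2) = v}"

lemma card3_help:
  assumes "(a::nat) < b" "b < c" "e = {a,b,c}"
  shows "\<exists>u v w. u < v \<and> v < w \<and> e = {u,v,w}"
  using assms by blast

lemma card3_ord:
  assumes "card (e::nat set) = 3"
  shows "\<exists>u v w. u < v \<and> v < w \<and> e = {u,v,w}"
proof -
  obtain x y z where e: "e = {x,y,z}" "x \<noteq> y" "y \<noteq> z" "x \<noteq> z"
    using assms unfolding card_3_iff by blast
  consider "x < y" "y < z" | "x < z" "z < y" | "y < x" "x < z" | "y < z" "z < x" | "z < x" "x < y" | "z < y" "y < x"
    using e(2-4) by linarith
  then show ?thesis
  proof cases
    case 1 then show ?thesis by (rule card3_help[of x y z]) (use e(1) in blast)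
  next
    case 2 then show ?thesis by (rule card3_help[of x z y]) (use e(1) in blast)
  next
    case 3 then show ?thesis by (rule card3_help[of y x z]) (use e(1) in blast)
  next
    case 4 then show ?thesis by (rule card3_help[of y z x]) (use e(1) in blast)
  next
    case 5 then show ?thesis by (rule card3_help[of z x y]) (use e(1) in blast)
  next
    case 6 then show ?thesis by (rule card3_help[of z y x]) (use e(1) in blast)
  qed
qed

lemma ord_uniq:
  fixes a b c u v w :: nat
  assumes "a < b" "b < c" "u < v" "v < w" "{a,b,c} = {u,v,w}"
  shows "a = u \<and> b = v \<and> c = w"
proof -
  have "a \<in> {u,v,w}" "b \<in> {u,v,w}" "c \<in> {u,v,w}" "u \<in> {a,b,c}" "v \<in> {a,b,c}" "w \<in> {a,b,c}"
    using assms(5) by blast+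
  note m = this
  have "u \<le> a" using m(1) assms(1-4) by auto
  moreover have "a \<le> u" using m(4) assms(1-4) by auto
  moreover have "w \<le> c" using m(6) assms(1-4) by auto
  moreover have "c \<le> w" using m(3) assms(1-4) by auto
  ultimately have "a = u" "c = w" by auto
  then show ?thesis using m(2) assms(1-4) by auto
qed

lemma tpath_bound:
  assumes "\<not> ord_contains n G s (tight_path s)" "tpath n G g t"
  shows "t + 3 \<le> s"
proof (rule ccontr)
  assume "\<not> t + 3 \<le> s"
  hence ts: "s \<le> t + 2" by simp
  have "ord_contains n G s (tight_path s)"
    unfolding ord_contains_def
  proof (intro exI conjI ballI)
    show "strict_mono_on {1..s} g" using assms(2) ts unfolding tpath_def strict_mono_on_def by auto
    show "g ` {1..s} \<subseteq> {1..n}" using assms(2) ts unfolding tpath_def by auto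
    fix e assume "e \<in> tight_path s"
    then obtain j where j: "e = {j, j+1, j+2}" "1 \<le> j" "j + 2 \<le> s" unfolding tight_path_def by auto
    have "j \<in> {1..t}" using j ts by auto
    then show "g ` e \<in> G" using assms(2) j unfolding tpath_def by auto
  qed
  then show False using assms(1) by simp
qed

lemma tpath_zero:
  assumes "1 \<le> u" "u < v" "v \<le> n"
  shows "tpath n G (\<lambda>i. if i = 1 then u else v) 0"
  using assms unfolding tpath_def strict_mono_on_def by auto

lemma tpath_extend:
  assumes "tpath n G g t" "g (t+1) = u" "g (t+2) = v" "{u,v,w} \<in> G" "v < w" "w \<le> n"
  shows "tpath n G (g(t+3 := w)) (t+1)"
proof -
  have sm: "strict_mono_on {1..t+2} g" and im: "g ` {1..t+2} \<subseteq> {1..n}"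
    and ed: "\<forall>j\<in>{1..t}. {g j, g (j+1), g (j+2)} \<in> G" using assms(1) unfolding tpath_def by auto
  have le: "g x \<le> v" if "x \<in> {1..t+2}" for x
  proof (cases "x = t+2")
    case True then show ?thesis using assms(3) by simp
  next
    case False
    then have "x < t+2" "t+2 \<in> {1..t+2}" using that by auto
    then have "g x < g (t+2)" using sm that unfolding strict_mono_on_def by blast
    then show ?thesis using assms(3) by simp
  qed
  have "strict_mono_on {1..t+1+2} (g(t+3 := w))"
    unfolding strict_mono_on_def
  proof (intro allI impI, elim conjE)
    fix x y assume x: "x \<in> {1..t+1+2}" and y: "y \<in> {1..t+1+2}" and xy: "x < y"
    show "(g(t+3 := w)) x < (g(t+3 := w)) y"
    proof (cases "y = t+3")
      case True
      then have "x \<in> {1..t+2}" using x xy by auto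
      then show ?thesis using le True xy assms(5) by fastforce
    next
      case False
      then have "y \<in> {1..t+2}" "x \<in> {1..t+2}" using x y xy by auto
      then show ?thesis using sm xy False unfolding strict_mono_on_def by auto
    qed
  qed
  moreover have "(g(t+3 := w)) ` {1..t+1+2} \<subseteq> {1..n}"
  proof
    fix y assume "y \<in> (g(t+3 := w)) ` {1..t+1+2}"
    then obtain x where x: "x \<in> {1..t+1+2}" "y = (g(t+3 := w)) x" by blast
    show "y \<in> {1..n}"
    proof (cases "x = t+3")
      case True then show ?thesis using x assms(5,6) le[of "t+2"] im by auto
    next
      case False then have "x \<in> {1..t+2}" using x by auto
      then have "g x \<in> {1..n}" using im by blast
      then show ?thesis using x False by simp
    qed
  qed
  moreover have "\<forall>j\<in>{1..t+1}. {(g(t+3 := w)) j, (g(t+3 := w)) (j+1), (g(t+3 := w)) (j+2)} \<in> G"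
  proof
    fix j assume j: "j \<in> {1..t+1}"
    show "{(g(t+3 := w)) j, (g(t+3 := w)) (j+1), (g(t+3 := w)) (j+2)} \<in> G"
    proof (cases "j = t+1")
      case True then show ?thesis using assms(2,3,4) by (simp add: numeral_eq_Suc)
    next
      case False then have "j \<in> {1..t}" using j by auto
      then show ?thesis using ed by auto
    qed
  qed
  ultimately show ?thesis unfolding tpath_def by blast
qed

lemma lab_props:
  assumes nc: "\<not> ord_contains n G s (tight_path s)" and uv: "1 \<le> u" "u < v" "v \<le> n"
  shows "lab n G u v + 3 \<le> s"
    and "\<exists>g. tpath n G g (lab n G u v) \<and> g (lab n G u v + 1) = u \<and> g (lab n G u v + 2) = v"
    and "tpath n G g t \<Longrightarrow> g (t+1) = u \<Longrightarrow> g (t+2) = v \<Longrightarrow> t \<le> lab n G u v"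
proof -
  define S where "S = {t. \<exists>g. tpath n G g t \<and> g (t+1) = u \<and> g (t+2) = v}"
  have lab: "lab n G u v = Max S" unfolding S_def lab_def by simp
  have sub: "S \<subseteq> {..s}" unfolding S_def using tpath_bound[OF nc] by fastforce
  hence fin: "finite S" using finite_subset by blast
  have "0 \<in> S" unfolding S_def using tpath_zero[OF uv, of G] by (intro CollectI exI[of _ "\<lambda>i. if i = 1 then u else v"]) auto
  hence ne: "S \<noteq> {}" by blast
  have mem: "Max S \<in> S" using fin ne by (rule Max_in)
  then show "\<exists>g. tpath n G g (lab n G u v) \<and> g (lab n G u v + 1) = u \<and> g (lab n G u v + 2) = v"
    unfolding lab S_def by blast
  from mem obtain h where "tpath n G h (Max S)" unfolding S_def by blast
  then show "lab n G u v + 3 \<le> s" using tpath_bound[OF nc] lab by simp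
  assume "tpath n G g t" "g (t+1) = u" "g (t+2) = v"
  then have "t \<in> S" unfolding S_def by blast
  then show "t \<le> lab n G u v" using fin lab by simp
qed

definition htr :: "nat \<times> nat \<times> nat \<Rightarrow> nat set" where
  "htr = (\<lambda>(u,v,w). {u,v,w})"

lemma good_sub: "good_triples n \<phi> \<subseteq> {1..n} \<times> {1..n} \<times> {1..n}"
  unfolding good_triples_def by auto

lemma good_fin: "finite (good_triples n \<phi>)"
  using good_sub finite_subset by blast

lemma dir1:
  assumes s3: "s \<ge> 3" and G: "ord_hypergraph3 n G" and nc: "\<not> ord_contains n G s (tight_path s)"
  shows "\<exists>\<phi>. edge_labeling n (s-2) \<phi> \<and> card G \<le> card (good_triples n \<phi>)"
proof -
  define \<phi> where "\<phi> = lab n G"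
  have el: "edge_labeling n (s-2) \<phi>"
    unfolding edge_labeling_def
  proof (intro allI impI, elim conjE)
    fix u v assume "1 \<le> u" "u < v" "v \<le> n"
    from lab_props(1)[OF nc this] show "\<phi> u v < s - 2" unfolding \<phi>_def by linarith
  qed
  have "G \<subseteq> htr ` good_triples n \<phi>"
  proof
    fix e assume e: "e \<in> G"
    then have "e \<in> triples n" using G unfolding ord_hypergraph3_def by blast
    then have es: "e \<subseteq> {1..n}" "card e = 3" unfolding triples_def by auto
    obtain u v w where uvw: "u < v" "v < w" "e = {u,v,w}" using card3_ord[OF es(2)] by blast
    have r: "1 \<le> u" "w \<le> n" using es(1) uvw(3) by auto
    have r2: "v \<le> n" "1 \<le> v" using r uvw by linarith+
    have eG: "{u,v,w} \<in> G" using e uvw(3) by simp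
    obtain g where g: "tpath n G g (lab n G u v)" "g (lab n G u v + 1) = u" "g (lab n G u v + 2) = v"
      using lab_props(2)[OF nc r(1) uvw(1) r2(1)] by blast
    have ext: "tpath n G (g(lab n G u v + 3 := w)) (lab n G u v + 1)"
      using tpath_extend[OF g eG uvw(2) r(2)] .
    have val: "(g(lab n G u v + 3 := w)) (lab n G u v + 1 + 1) = v"
      "(g(lab n G u v + 3 := w)) (lab n G u v + 1 + 2) = w" using g by simp_all
    have "lab n G u v + 1 \<le> lab n G v w"
      using lab_props(3)[OF nc r2(2) uvw(2) r(2) ext val] .
    then have "(u,v,w) \<in> good_triples n \<phi>" unfolding good_triples_def \<phi>_def using uvw r by simp
    moreover have "e = htr (u,v,w)" unfolding htr_def using uvw(3) by simp
    ultimately show "e \<in> htr ` good_triples n \<phi>" by blast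
  qed
  then have "card G \<le> card (htr ` good_triples n \<phi>)" using good_fin by (intro card_mono) auto
  also have "\<dots> \<le> card (good_triples n \<phi>)" using good_fin by (rule card_image_le)
  finally show ?thesis using el by blast
qed

lemma htr_inj: "inj_on htr (good_triples n \<phi>)"
proof
  fix x y assume x: "x \<in> good_triples n \<phi>" and y: "y \<in> good_triples n \<phi>" and h: "htr x = htr y"
  obtain a b c where xa: "x = (a,b,c)" "a < b" "b < c" using x unfolding good_triples_def by auto
  obtain u v w where yu: "y = (u,v,w)" "u < v" "v < w" using y unfolding good_triples_def by auto
  have "{a,b,c} = {u,v,w}" using h xa yu unfolding htr_def by simp
  then show "x = y" using ord_uniq[OF xa(2,3) yu(2,3)] xa yu by simp
qed

lemma dir2_step:
  assumes sm: "strict_mono_on {1..s} f"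
    and all: "\<forall>e\<in>tight_path s. f ` e \<in> htr ` good_triples n \<phi>"
    and j: "1 \<le> j" "j + 2 \<le> s"
  shows "\<phi> (f j) (f (j+1)) < \<phi> (f (j+1)) (f (j+2))"
proof -
  have "{j, j+1, j+2} \<in> tight_path s" unfolding tight_path_def using j by blast
  then have "f ` {j, j+1, j+2} \<in> htr ` good_triples n \<phi>" using all by blast
  then obtain a b c where abc: "(a,b,c) \<in> good_triples n \<phi>" "{a,b,c} = {f j, f (j+1), f (j+2)}"
    unfolding htr_def by force
  have o: "a < b" "b < c" "\<phi> a b < \<phi> b c" using abc(1) unfolding good_triples_def by auto
  have "f j < f (j+1)" "f (j+1) < f (j+2)" using sm j unfolding strict_mono_on_def by auto
  from ord_uniq[OF o(1,2) this abc(2)] o(3) show ?thesis by simp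
qed

lemma dir2:
  assumes s3: "s \<ge> 3" and el: "edge_labeling n (s-2) \<phi>"
  shows "ord_hypergraph3 n (htr ` good_triples n \<phi>) \<and>
    \<not> ord_contains n (htr ` good_triples n \<phi>) s (tight_path s) \<and>
    card (htr ` good_triples n \<phi>) = card (good_triples n \<phi>)"
proof (intro conjI)
  show "card (htr ` good_triples n \<phi>) = card (good_triples n \<phi>)"
    using htr_inj by (rule card_image)
  show "ord_hypergraph3 n (htr ` good_triples n \<phi>)"
    unfolding ord_hypergraph3_def triples_def htr_def good_triples_def by auto
  show "\<not> ord_contains n (htr ` good_triples n \<phi>) s (tight_path s)"
  proof
    assume "ord_contains n (htr ` good_triples n \<phi>) s (tight_path s)"
    then obtain f where sm: "strict_mono_on {1..s} f" and im: "f ` {1..s} \<subseteq> {1..n}"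
      and all: "\<forall>e\<in>tight_path s. f ` e \<in> htr ` good_triples n \<phi>"
      unfolding ord_contains_def by blast
    have ind: "j + 2 \<le> s \<longrightarrow> j \<le> \<phi> (f (j+1)) (f (j+2))" for j
    proof (induction j)
      case 0 then show ?case by simp
    next
      case (Suc j)
      show ?case
      proof
        assume "Suc j + 2 \<le> s"
        then have "j \<le> \<phi> (f (j+1)) (f (j+2))" "\<phi> (f (j+1)) (f (j+1+1)) < \<phi> (f (j+1+1)) (f (j+1+2))"
          using Suc dir2_step[OF sm all, of "j+1"] by auto
        then show "Suc j \<le> \<phi> (f (Suc j+1)) (f (Suc j+2))" by (simp add: numeral_eq_Suc)
      qed
    qed
    have "s - 2 \<le> \<phi> (f (s-2+1)) (f (s-2+2))" using ind[of "s-2"] s3 by simp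
    moreover have i: "s-2+1 \<in> {1..s}" "s-2+2 \<in> {1..s}" "s-2+1 < s-2+2" using s3 by auto
    moreover have "f (s-2+1) < f (s-2+2)" using sm i unfolding strict_mono_on_def by blast
    moreover have "f (s-2+1) \<in> {1..n}" "f (s-2+2) \<in> {1..n}" using im i by blast+
    ultimately show False using el unfolding edge_labeling_def by fastforce
  qed
qed

theorem proposition4p1:
  fixes n s :: nat
  assumes "s \<ge> 3"
  shows "ex3 n s (tight_path s) = f_good n (s - 2)"
proof -
  define A where "A = {card G | G. ord_hypergraph3 n G \<and> \<not> ord_contains n G s (tight_path s)}"
  define B where "B = {card (good_triples n \<phi>) | \<phi>. edge_labeling n (s-2) \<phi>}"
  have ex: "ex3 n s (tight_path s) = Max A" unfolding A_def ex3_def by simp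
  have fg: "f_good n (s - 2) = Max B" unfolding B_def f_good_def by simp
  have cb: "card (good_triples n \<psi>) \<le> n * (n * n)" for \<psi>
  proof -
    have "card (good_triples n \<psi>) \<le> card ({1..n} \<times> {1..n} \<times> {1..n})"
      by (intro card_mono good_sub) simp
    then show ?thesis by simp
  qed
  have "B \<subseteq> {..n * (n * n)}"
    unfolding B_def using cb by auto
  then have finB: "finite B" using finite_subset by blast
  have "A \<subseteq> card ` Pow (triples n)" unfolding A_def ord_hypergraph3_def by auto
  moreover have "finite (triples n)"
    by (rule finite_subset[of _ "Pow {1..n}"]) (auto simp: triples_def)
  ultimately have finA: "finite A" using finite_subset by blast
  have "card (good_triples n (\<lambda>_ _. 0)) \<in> B" unfolding B_def edge_labeling_def using assms by auto
  then have neB: "B \<noteq> {}" by blast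
  obtain b where "b \<in> B" using neB by blast
  then obtain \<phi> where el: "edge_labeling n (s-2) \<phi>" unfolding B_def by blast
  have neA: "A \<noteq> {}" using dir2[OF assms el] unfolding A_def by blast
  have "Max A \<le> Max B"
  proof (rule Max.boundedI[OF finA neA])
    fix a assume "a \<in> A"
    then obtain G where G: "a = card G" "ord_hypergraph3 n G" "\<not> ord_contains n G s (tight_path s)"
      unfolding A_def by blast
    obtain \<psi> where p1: "edge_labeling n (s-2) \<psi>" and p2: "card G \<le> card (good_triples n \<psi>)"
      using dir1[OF assms G(2,3)] by blast
    have "card (good_triples n \<psi>) \<in> B" unfolding B_def using p1 by blast
    then have "card (good_triples n \<psi>) \<le> Max B" using finB by simp
    then show "a \<le> Max B" using G(1) p2 by linarith
  qed
  moreover have "Max B \<le> Max A"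
  proof (rule Max.boundedI[OF finB neB])
    fix b assume "b \<in> B"
    then obtain \<psi> where bp: "b = card (good_triples n \<psi>)" and elp: "edge_labeling n (s-2) \<psi>"
      unfolding B_def by blast
    have d: "ord_hypergraph3 n (htr ` good_triples n \<psi>)"
      "\<not> ord_contains n (htr ` good_triples n \<psi>) s (tight_path s)"
      "b = card (htr ` good_triples n \<psi>)" using dir2[OF assms elp] bp by auto
    have "b \<in> A" unfolding A_def using d by blast
    then show "b \<le> Max A" using finA by simp
  qed
  ultimately show ?thesis using ex fg by simp
qed

end
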